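(* Let $p$ be a prime, $k>0$ an integer, and $G_{p,k}=C_{p^\infty}\times C_k\times\mathbf{T}$ (a 1-dimensional Lie group). Every closed 1-dimensional subgroup of $G_{p,k}$ is of the form $D\times\mathbf{T}$, where $D$ is a subgroup of $C_{p^\infty}\times C_k$ (and every such set is a closed 1-dimensional subgroup). Moreover, the set of closed 1-dimensional subgroups is closed in $\mathcal{C}(G_{p,k})$, and the map $\pi^*:\mathcal{C}(C_{p^\infty}\times C_k)\to\mathcal{C}(G_{p,k})$, $D\mapsto\pi^{-1}(D)=D\times\mathbf{T}$, is a homeomorphism onto this set.
   Context: $\mathbf{T}$ is the circle group; $C_m\subset\mathbf{T}$ is the group of $m$-th roots of unity; $C_{p^\infty}=\bigcup_{\ell\ge1}C_{p^\ell}$ is the Prüfer $p$-group, with the discrete topology. $\pi:G_{p,k}\to C_{p^\infty}\times C_k$ is the projection onto the first two factors. $\mathcal{C}(G)$ denotes the space of closed subgroups of a locally compact group $G$ with the Chabauty topology, generated by the sets $\{H:H\cap K=\emptyset\}$ ($K$ compact) and $\{H:H\cap U\neq\emptyset\}$ ($U$ open). *)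

theory Defs
  imports "HOL-Analysis.Analysis" "HOL-Algebra.Group"
begin

definition circle_grp :: "complex set" where
  "circle_grp = sphere 0 1"

definition roots_unity :: "nat \<Rightarrow> complex set" where
  "roots_unity m = {z. z ^ m = 1}"

definition pruefer :: "nat \<Rightarrow> complex set" where
  "pruefer p = (\<Union>l\<in>{1..}. roots_unity (p ^ l))"

definition Dgrp :: "nat \<Rightarrow> nat \<Rightarrow> (complex \<times> complex) monoid" where
  "Dgrp p k = \<lparr> carrier = pruefer p \<times> roots_unity k,
               mult = (\<lambda>(a,b) (c,d). (a * c, b * d)),
               one = (1, 1) \<rparr>"

definition Dtop :: "nat \<Rightarrow> nat \<Rightarrow> (complex \<times> complex) topology" where
  "Dtop p k = prod_topology (discrete_topology (pruefer p)) (discrete_topology (roots_unity k))"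

definition Ggrp :: "nat \<Rightarrow> nat \<Rightarrow> ((complex \<times> complex) \<times> complex) monoid" where
  "Ggrp p k = \<lparr> carrier = (pruefer p \<times> roots_unity k) \<times> circle_grp,
               mult = (\<lambda>((a,b),z) ((c,d),w). ((a * c, b * d), z * w)),
               one = ((1, 1), 1) \<rparr>"

definition Gtop :: "nat \<Rightarrow> nat \<Rightarrow> ((complex \<times> complex) \<times> complex) topology" where
  "Gtop p k = prod_topology (Dtop p k) (top_of_set circle_grp)"

definition pistar :: "nat \<Rightarrow> nat \<Rightarrow> (complex \<times> complex) set \<Rightarrow> ((complex \<times> complex) \<times> complex) set" where
  "pistar p k D = {g \<in> carrier (Ggrp p k). fst g \<in> D}"

definition closed_subgroups :: "'a topology \<Rightarrow> ('a, 'b) monoid_scheme \<Rightarrow> 'a set set" where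
  "closed_subgroups X G = {H. subgroup H G \<and> closedin X H}"

definition chabauty :: "'a topology \<Rightarrow> ('a, 'b) monoid_scheme \<Rightarrow> 'a set topology" where
  "chabauty X G = subtopology
     (topology_generated_by
        ({{H. H \<inter> K = {}} | K. compactin X K} \<union> {{H. H \<inter> U \<noteq> {}} | U. openin X U}))
     (closed_subgroups X G)"

text \<open>Dimension of a closed subgroup H of G_{p,k}: the dimension of its Lie algebra
  {X in Lie(G). exp(tX) in H for all t}, where Lie(G_{p,k}) = Lie(T) = R and
  exp(tX) = ((1,1), e^{itX}).\<close>

definition lie_alg :: "((complex \<times> complex) \<times> complex) set \<Rightarrow> real set" where
  "lie_alg H = {x. \<forall>t::real. ((1, 1), cis (t * x)) \<in> H}"

definition lie_dim :: "((complex \<times> complex) \<times> complex) set \<Rightarrow> nat" where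
  "lie_dim H = dim (lie_alg H)"

definition closed_1dim_subgroups :: "nat \<Rightarrow> nat \<Rightarrow> ((complex \<times> complex) \<times> complex) set set" where
  "closed_1dim_subgroups p k = {H \<in> closed_subgroups (Gtop p k) (Ggrp p k). lie_dim H = 1}"

end

theory Submission
  imports Defs
begin

lemma pr_mult:
  assumes "a \<in> pruefer p" "b \<in> pruefer p" shows "a * b \<in> pruefer p"
proof -
  obtain l where l: "l \<ge> 1" "a ^ (p ^ l) = 1" using assms(1) by (auto simp: pruefer_def roots_unity_def)
  obtain m where m: "m \<ge> 1" "b ^ (p ^ m) = 1" using assms(2) by (auto simp: pruefer_def roots_unity_def)
  have "(a * b) ^ (p ^ (l + m)) = (a ^ (p ^ l)) ^ (p ^ m) * (b ^ (p ^ m)) ^ (p ^ l)"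
    by (simp add: power_mult_distrib power_add flip: power_mult) (simp add: mult.commute)
  also have "\<dots> = 1" using l m by simp
  finally show ?thesis using l by (auto simp: pruefer_def roots_unity_def intro!: bexI[of _ "l+m"])
qed

lemma pr_one: "1 \<in> pruefer p"
  by (auto simp: pruefer_def roots_unity_def intro!: bexI[of _ 1])

lemma pr_inv: assumes "a \<in> pruefer p" shows "inverse a \<in> pruefer p"
  using assms by (auto simp: pruefer_def roots_unity_def power_inverse)

lemma pr_nz: assumes "a \<in> pruefer p" "p > 0" shows "a \<noteq> 0"
  using assms by (auto simp: pruefer_def roots_unity_def power_0_left split: if_splits)

lemma ru_mult: "a \<in> roots_unity k \<Longrightarrow> b \<in> roots_unity k \<Longrightarrow> a * b \<in> roots_unity k"
  by (simp add: roots_unity_def power_mult_distrib)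

lemma ru_one: "1 \<in> roots_unity k" by (simp add: roots_unity_def)

lemma ru_inv: "a \<in> roots_unity k \<Longrightarrow> inverse a \<in> roots_unity k"
  by (simp add: roots_unity_def power_inverse)

lemma ru_nz: "a \<in> roots_unity k \<Longrightarrow> k > 0 \<Longrightarrow> a \<noteq> 0"
  by (auto simp: roots_unity_def power_0_left split: if_splits)

lemma ci_mult: "a \<in> circle_grp \<Longrightarrow> b \<in> circle_grp \<Longrightarrow> a * b \<in> circle_grp"
  by (simp add: circle_grp_def norm_mult)

lemma ci_one: "1 \<in> circle_grp" by (simp add: circle_grp_def)

lemma ci_inv: "a \<in> circle_grp \<Longrightarrow> inverse a \<in> circle_grp"
  by (simp add: circle_grp_def norm_inverse)

lemma ci_nz: "a \<in> circle_grp \<Longrightarrow> a \<noteq> 0"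
  by (auto simp: circle_grp_def)

lemma ci_cis: "cis t \<in> circle_grp" by (simp add: circle_grp_def)

lemma ci_ne: "circle_grp \<noteq> {}" using ci_one by auto

lemma D_carrier: "carrier (Dgrp p k) = pruefer p \<times> roots_unity k" by (simp add: Dgrp_def)
lemma D_one: "\<one>\<^bsub>Dgrp p k\<^esub> = (1,1)" by (simp add: Dgrp_def)
lemma D_mult: "x \<otimes>\<^bsub>Dgrp p k\<^esub> y = (fst x * fst y, snd x * snd y)"
  by (cases x; cases y) (simp add: Dgrp_def)

lemma G_carrier: "carrier (Ggrp p k) = (pruefer p \<times> roots_unity k) \<times> circle_grp" by (simp add: Ggrp_def)
lemma G_one: "\<one>\<^bsub>Ggrp p k\<^esub> = ((1,1),1)" by (simp add: Ggrp_def)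
lemma G_mult: "x \<otimes>\<^bsub>Ggrp p k\<^esub> y = (fst x \<otimes>\<^bsub>Dgrp p k\<^esub> fst y, snd x * snd y)"
  by (cases x; cases y) (auto simp: Ggrp_def D_mult)

lemma D_group: assumes "p > 0" "k > 0" shows "group (Dgrp p k)"
proof (rule groupI)
  fix x y assume "x \<in> carrier (Dgrp p k)" "y \<in> carrier (Dgrp p k)"
  then show "x \<otimes>\<^bsub>Dgrp p k\<^esub> y \<in> carrier (Dgrp p k)"
    by (auto simp: D_carrier D_mult pr_mult ru_mult)
next
  show "\<one>\<^bsub>Dgrp p k\<^esub> \<in> carrier (Dgrp p k)" by (simp add: D_carrier D_one pr_one ru_one)
next
  fix x y z show "x \<otimes>\<^bsub>Dgrp p k\<^esub> y \<otimes>\<^bsub>Dgrp p k\<^esub> z = x \<otimes>\<^bsub>Dgrp p k\<^esub> (y \<otimes>\<^bsub>Dgrp p k\<^esub> z)"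
    by (simp add: D_mult mult.assoc)
next
  fix x show "\<one>\<^bsub>Dgrp p k\<^esub> \<otimes>\<^bsub>Dgrp p k\<^esub> x = x" by (simp add: D_mult D_one)
next
  fix x assume x: "x \<in> carrier (Dgrp p k)"
  show "\<exists>y\<in>carrier (Dgrp p k). y \<otimes>\<^bsub>Dgrp p k\<^esub> x = \<one>\<^bsub>Dgrp p k\<^esub>"
    using x assms
    by (intro bexI[of _ "(inverse (fst x), inverse (snd x))"])
       (auto simp: D_carrier D_mult D_one pr_inv ru_inv pr_nz ru_nz)
qed

lemma D_inv: assumes "p > 0" "k > 0" "x \<in> carrier (Dgrp p k)"
  shows "inv\<^bsub>Dgrp p k\<^esub> x = (inverse (fst x), inverse (snd x))"
  using assms
  by (intro group.inv_equality[OF D_group[OF assms(1,2)]])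
     (auto simp: D_carrier D_mult D_one pr_inv ru_inv pr_nz ru_nz)

lemma G_group: assumes "p > 0" "k > 0" shows "group (Ggrp p k)"
proof (rule groupI)
  fix x y assume "x \<in> carrier (Ggrp p k)" "y \<in> carrier (Ggrp p k)"
  then show "x \<otimes>\<^bsub>Ggrp p k\<^esub> y \<in> carrier (Ggrp p k)"
    by (auto simp: G_carrier G_mult D_mult pr_mult ru_mult ci_mult)
next
  show "\<one>\<^bsub>Ggrp p k\<^esub> \<in> carrier (Ggrp p k)" by (simp add: G_carrier G_one pr_one ru_one ci_one)
next
  fix x y z show "x \<otimes>\<^bsub>Ggrp p k\<^esub> y \<otimes>\<^bsub>Ggrp p k\<^esub> z = x \<otimes>\<^bsub>Ggrp p k\<^esub> (y \<otimes>\<^bsub>Ggrp p k\<^esub> z)"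
    by (simp add: G_mult D_mult mult.assoc)
next
  fix x show "\<one>\<^bsub>Ggrp p k\<^esub> \<otimes>\<^bsub>Ggrp p k\<^esub> x = x" by (simp add: G_mult D_mult G_one)
next
  fix x assume x: "x \<in> carrier (Ggrp p k)"
  show "\<exists>y\<in>carrier (Ggrp p k). y \<otimes>\<^bsub>Ggrp p k\<^esub> x = \<one>\<^bsub>Ggrp p k\<^esub>"
    using x assms
    by (intro bexI[of _ "((inverse (fst (fst x)), inverse (snd (fst x))), inverse (snd x))"])
       (auto simp: G_carrier G_mult D_mult G_one pr_inv ru_inv pr_nz ru_nz ci_inv ci_nz)
qed

lemma G_inv: assumes "p > 0" "k > 0" "x \<in> carrier (Ggrp p k)"
  shows "inv\<^bsub>Ggrp p k\<^esub> x = (inv\<^bsub>Dgrp p k\<^esub> (fst x), inverse (snd x))"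
  using assms
  by (intro group.inv_equality[OF G_group[OF assms(1,2)]])
     (auto simp: D_inv G_carrier D_carrier G_mult D_mult G_one pr_inv ru_inv pr_nz ru_nz ci_inv ci_nz)


lemma sub_fst:
  assumes pk: "p > 0" "k > 0" and H: "subgroup H (Ggrp p k)"
    and T: "\<forall>z\<in>circle_grp. ((1,1),z) \<in> H"
  shows "subgroup (fst ` H) (Dgrp p k)" "H = fst ` H \<times> circle_grp"
proof -
  interpret G: group "Ggrp p k" by (rule G_group[OF pk])
  interpret D: group "Dgrp p k" by (rule D_group[OF pk])
  have Hc: "H \<subseteq> (pruefer p \<times> roots_unity k) \<times> circle_grp"
    using subgroup.subset[OF H] by (simp add: G_carrier)
  show "subgroup (fst ` H) (Dgrp p k)"
  proof (rule D.subgroupI)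
    show "fst ` H \<subseteq> carrier (Dgrp p k)" using Hc by (auto simp: D_carrier)
    show "fst ` H \<noteq> {}" using subgroup.one_closed[OF H] by auto
  next
    fix a assume "a \<in> fst ` H"
    then obtain h where h: "h \<in> H" "a = fst h" by auto
    have "inv\<^bsub>Ggrp p k\<^esub> h \<in> H" using subgroup.m_inv_closed[OF H h(1)] .
    moreover have "inv\<^bsub>Ggrp p k\<^esub> h = (inv\<^bsub>Dgrp p k\<^esub> a, inverse (snd h))"
      using G_inv[OF pk, of h] h Hc by (auto simp: G_carrier)
    ultimately show "inv\<^bsub>Dgrp p k\<^esub> a \<in> fst ` H" by force
  next
    fix a b assume "a \<in> fst ` H" "b \<in> fst ` H"
    then obtain g h where "g \<in> H" "h \<in> H" "a = fst g" "b = fst h" by auto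
    then show "a \<otimes>\<^bsub>Dgrp p k\<^esub> b \<in> fst ` H"
      using subgroup.m_closed[OF H, of g h] by (force simp: G_mult)
  qed
  show "H = fst ` H \<times> circle_grp"
  proof
    show "H \<subseteq> fst ` H \<times> circle_grp" using Hc by force
  next
    show "fst ` H \<times> circle_grp \<subseteq> H"
    proof
      fix y assume "y \<in> fst ` H \<times> circle_grp"
      then obtain h z where z: "z \<in> circle_grp" and h: "h \<in> H" and y: "y = (fst h, z)" by auto
      have "snd h \<in> circle_grp" using h Hc by auto
      then have w: "inverse (snd h) * z \<in> circle_grp" "snd h \<noteq> 0"
        using z by (auto simp: ci_mult ci_inv ci_nz)
      have "((1,1), inverse (snd h) * z) \<in> H" using T w by auto
      from subgroup.m_closed[OF H h this]
      show "y \<in> H" using w y by (simp add: G_mult D_mult mult.assoc[symmetric])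
    qed
  qed
qed

lemma sub_times:
  assumes pk: "p > 0" "k > 0" and D: "subgroup D (Dgrp p k)"
  shows "subgroup (D \<times> circle_grp) (Ggrp p k)"
proof -
  interpret G: group "Ggrp p k" by (rule G_group[OF pk])
  have Dc: "D \<subseteq> pruefer p \<times> roots_unity k"
    using subgroup.subset[OF D] by (simp add: D_carrier)
  show ?thesis
  proof (rule G.subgroupI)
    show "D \<times> circle_grp \<subseteq> carrier (Ggrp p k)" using Dc by (auto simp: G_carrier)
    show "D \<times> circle_grp \<noteq> {}" using subgroup.one_closed[OF D] ci_one by auto
  next
    fix a assume a: "a \<in> D \<times> circle_grp"
    then have "a \<in> carrier (Ggrp p k)" using Dc by (auto simp: G_carrier)
    then show "inv\<^bsub>Ggrp p k\<^esub> a \<in> D \<times> circle_grp"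
      using a G_inv[OF pk] subgroup.m_inv_closed[OF D] by (auto simp: ci_inv)
  next
    fix a b assume "a \<in> D \<times> circle_grp" "b \<in> D \<times> circle_grp"
    then show "a \<otimes>\<^bsub>Ggrp p k\<^esub> b \<in> D \<times> circle_grp"
      using subgroup.m_closed[OF D] by (auto simp: G_mult ci_mult)
  qed
qed

lemma lie_dim_iff: "lie_dim H = 1 \<longleftrightarrow> (\<forall>z\<in>circle_grp. ((1,1),z) \<in> H)"
proof
  assume T: "\<forall>z\<in>circle_grp. ((1,1),z) \<in> H"
  have "lie_alg H = UNIV" using T ci_cis by (auto simp: lie_alg_def)
  then show "lie_dim H = 1" by (simp add: lie_dim_def)
next
  assume L: "lie_dim H = 1"
  show "\<forall>z\<in>circle_grp. ((1,1),z) \<in> H"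
  proof (rule ccontr)
    assume "\<not> ?thesis"
    then obtain z where z: "z \<in> circle_grp" "((1,1),z) \<notin> H" by auto
    have "lie_alg H \<subseteq> {0}"
    proof
      fix x assume x: "x \<in> lie_alg H"
      show "x \<in> {0}"
      proof (rule ccontr)
        assume "x \<notin> {0}"
        moreover have "z \<noteq> 0" using z(1) by (auto simp: circle_grp_def)
        ultimately have "cis ((Arg z / x) * x) = z" using z(1)
          by (auto simp: circle_grp_def cis_Arg sgn_div_norm)
        then show False using x z(2) by (metis (mono_tags, lifting) lie_alg_def mem_Collect_eq)
      qed
    qed
    then have "lie_dim H = 0" using dim_subset[of "lie_alg H" "{0}"] by (simp add: lie_dim_def)
    then show False using L by simp
  qed
qed


lemma Dtop_discrete: "Dtop p k = discrete_topology (pruefer p \<times> roots_unity k)"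
  by (simp add: Dtop_def prod_topology_discrete_topology)

lemma topspace_Dtop: "topspace (Dtop p k) = pruefer p \<times> roots_unity k"
  by (simp add: Dtop_discrete)

lemma topspace_Gtop: "topspace (Gtop p k) = (pruefer p \<times> roots_unity k) \<times> circle_grp"
  by (simp add: Gtop_def topspace_Dtop)

lemma topspace_gen_chab:
  "topspace (topology_generated_by
        ({{H. H \<inter> K = {}} | K. compactin X K} \<union> {{H. H \<inter> U \<noteq> {}} | U. openin X U})) = UNIV"
proof -
  have "UNIV \<in> {{H. H \<inter> K = {}} | K. compactin X K}"
    by (rule CollectI, rule exI[of _ "{}"]) auto
  then show ?thesis by (auto simp del: Union_Un_distrib)
qed

lemma topspace_chabauty: "topspace (chabauty X G) = closed_subgroups X G"
  unfolding chabauty_def by (simp only: topspace_subtopology topspace_gen_chab) simp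

lemma closed_subgroups_D: "closed_subgroups (Dtop p k) (Dgrp p k) = {D. subgroup D (Dgrp p k)}"
  using subgroup.subset by (fastforce simp: closed_subgroups_def Dtop_discrete D_carrier)

lemma pistar_eq: "subgroup D (Dgrp p k) \<Longrightarrow> pistar p k D = D \<times> circle_grp"
  using subgroup.subset[of D "Dgrp p k"] by (auto simp: pistar_def G_carrier D_carrier)

lemma C1_iff:
  assumes pk: "p > 0" "k > 0"
  shows "H \<in> closed_1dim_subgroups p k \<longleftrightarrow> (\<exists>D. subgroup D (Dgrp p k) \<and> H = D \<times> circle_grp)"
proof
  assume "H \<in> closed_1dim_subgroups p k"
  then have H: "subgroup H (Ggrp p k)" "\<forall>z\<in>circle_grp. ((1,1),z) \<in> H"
    using lie_dim_iff[of H] by (auto simp: closed_1dim_subgroups_def closed_subgroups_def)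
  then show "\<exists>D. subgroup D (Dgrp p k) \<and> H = D \<times> circle_grp"
    using sub_fst[OF pk H] by blast
next
  assume "\<exists>D. subgroup D (Dgrp p k) \<and> H = D \<times> circle_grp"
  then obtain D where D: "subgroup D (Dgrp p k)" "H = D \<times> circle_grp" by blast
  have Dc: "D \<subseteq> pruefer p \<times> roots_unity k"
    using subgroup.subset[OF D(1)] by (simp add: D_carrier)
  have "closedin (Gtop p k) H"
    unfolding D(2) Gtop_def closedin_prod_Times_iff
    using Dc by (simp add: Dtop_discrete)
  moreover have "(1,1) \<in> D" using subgroup.one_closed[OF D(1)] by (simp add: D_one)
  ultimately show "H \<in> closed_1dim_subgroups p k"
    using sub_times[OF pk D(1)] D(2) lie_dim_iff[of H]
    by (auto simp: closed_1dim_subgroups_def closed_subgroups_def)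
qed


lemma closed_C1:
  "closedin (chabauty (Gtop p k) (Ggrp p k)) (closed_1dim_subgroups p k)"
proof -
  let ?B = "{{H. H \<inter> K = {}} | K. compactin (Gtop p k) K} \<union>
            {{H. H \<inter> U \<noteq> {}} | U. openin (Gtop p k) U}"
  let ?O = "\<Union>z\<in>circle_grp. {H. H \<inter> {((1::complex,1::complex),z)} = {}}"
  have eq: "topspace (chabauty (Gtop p k) (Ggrp p k)) - closed_1dim_subgroups p k
      = ?O \<inter> closed_subgroups (Gtop p k) (Ggrp p k)"
    unfolding topspace_chabauty closed_1dim_subgroups_def lie_dim_iff by blast
  have oO: "openin (topology_generated_by ?B) ?O"
  proof (rule openin_Union, clarify)
    fix z assume z: "z \<in> circle_grp"
    have "compactin (Gtop p k) {((1,1),z)}"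
      using z by (simp add: topspace_Gtop pr_one ru_one)
    then show "openin (topology_generated_by ?B) {H. H \<inter> {((1,1),z)} = {}}"
      by (intro topology_generated_by_Basis) blast
  qed
  have "openin (chabauty (Gtop p k) (Ggrp p k))
       (topspace (chabauty (Gtop p k) (Ggrp p k)) - closed_1dim_subgroups p k)"
    unfolding eq unfolding chabauty_def openin_subtopology by (rule exI[of _ ?O]) (simp only: oO simp_thms)
  moreover have "closed_1dim_subgroups p k \<subseteq> topspace (chabauty (Gtop p k) (Ggrp p k))"
    by (auto simp: topspace_chabauty closed_1dim_subgroups_def)
  ultimately show ?thesis by (simp add: closedin_def)
qed


lemma homeo_C1:
  assumes pk: "p > 0" "k > 0"
  shows "homeomorphic_map (chabauty (Dtop p k) (Dgrp p k))
           (subtopology (chabauty (Gtop p k) (Ggrp p k)) (closed_1dim_subgroups p k))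
           (pistar p k)"
proof -
  define BG where "BG = {{H. H \<inter> K = {}} | K. compactin (Gtop p k) K} \<union>
            {{H. H \<inter> U \<noteq> {}} | U. openin (Gtop p k) U}"
  define BD where "BD = {{H. H \<inter> K = {}} | K. compactin (Dtop p k) K} \<union>
            {{H. H \<inter> U \<noteq> {}} | U. openin (Dtop p k) U}"
  define SD where "SD = {D. subgroup D (Dgrp p k)}"
  define C1 where "C1 = closed_1dim_subgroups p k"
  define CSG where "CSG = closed_subgroups (Gtop p k) (Ggrp p k)"
  define X where "X = chabauty (Dtop p k) (Dgrp p k)"
  define Y where "Y = subtopology (chabauty (Gtop p k) (Ggrp p k)) (closed_1dim_subgroups p k)"
  have C1CSG: "C1 \<subseteq> CSG" by (auto simp: C1_def CSG_def closed_1dim_subgroups_def)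
  have X: "X = subtopology (topology_generated_by BD) SD"
    by (simp add: X_def chabauty_def BD_def SD_def closed_subgroups_D)
  have Y: "Y = subtopology (topology_generated_by BG) C1"
    using C1CSG by (simp add: Y_def chabauty_def BG_def C1_def CSG_def subtopology_subtopology Int_absorb1 Int_absorb2)
  have tX: "topspace X = SD" by (simp add: X_def topspace_chabauty closed_subgroups_D SD_def)
  have tY: "topspace Y = C1" using C1CSG
    by (simp add: Y_def topspace_chabauty C1_def CSG_def Int_absorb1 Int_absorb2)
  have UBG: "\<Union>BG = UNIV" using topspace_gen_chab[of "Gtop p k"] by (simp add: BG_def)
  have UBD: "\<Union>BD = UNIV" using topspace_gen_chab[of "Dtop p k"] by (simp add: BD_def)
  have C1eq: "H \<in> C1 \<longleftrightarrow> (\<exists>D\<in>SD. H = D \<times> circle_grp)" for H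
    using C1_iff[OF pk] by (auto simp: C1_def SD_def)
  have SDc: "D \<subseteq> pruefer p \<times> roots_unity k" if "D \<in> SD" for D
    using that subgroup.subset by (force simp: SD_def D_carrier)
  have fD: "pistar p k D = D \<times> circle_grp" if "D \<in> SD" for D
    using that pistar_eq by (simp add: SD_def)
  have fst_times: "fst ` (D \<times> circle_grp) = D" for D using ci_ne by (simp add: fst_image_times)
  have cf: "continuous_map X Y (pistar p k)"
  proof -
    have "continuous_map X (topology_generated_by BG) (pistar p k)"
    proof (rule continuous_on_generated_topo)
      show "pistar p k ` topspace X \<subseteq> \<Union> BG" by (simp add: UBG)
    next
      fix U assume "U \<in> BG"
      then consider K where "U = {H. H \<inter> K = {}}" "compactin (Gtop p k) K"
        | V where "U = {H. H \<inter> V \<noteq> {}}" "openin (Gtop p k) V"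
        unfolding BG_def by blast
      then show "openin X (pistar p k -` U \<inter> topspace X)"
      proof cases
        case 1
        have Kc: "K \<subseteq> (pruefer p \<times> roots_unity k) \<times> circle_grp"
          using compactin_subset_topspace[OF 1(2)] by (simp add: topspace_Gtop)
        have "compactin (Dtop p k) (fst ` K)"
          using image_compactin[OF 1(2), of "Dtop p k" fst] by (simp add: Gtop_def continuous_map_fst)
        then have "openin (topology_generated_by BD) {D. D \<inter> fst ` K = {}}"
          by (intro topology_generated_by_Basis) (auto simp: BD_def)
        moreover have "pistar p k -` U \<inter> topspace X = {D. D \<inter> fst ` K = {}} \<inter> SD"
          using Kc by (auto simp: tX 1(1) fD) (force+)
        ultimately show ?thesis unfolding X openin_subtopology by blast
      next
        case 2
        have Vc: "V \<subseteq> (pruefer p \<times> roots_unity k) \<times> circle_grp"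
          using openin_subset[OF 2(2)] by (simp add: topspace_Gtop)
        have "openin (Dtop p k) (fst ` V)"
          using Vc by (auto simp: Dtop_discrete)
        then have "openin (topology_generated_by BD) {D. D \<inter> fst ` V \<noteq> {}}"
          by (intro topology_generated_by_Basis) (auto simp: BD_def)
        moreover have "pistar p k -` U \<inter> topspace X = {D. D \<inter> fst ` V \<noteq> {}} \<inter> SD"
          using Vc by (auto simp: tX 2(1) fD) (force+)
        ultimately show ?thesis unfolding X openin_subtopology by blast
      qed
    qed
    moreover have "pistar p k ` topspace X \<subseteq> C1"
      using C1eq fD by (auto simp: tX)
    ultimately show ?thesis unfolding Y by (auto simp add: continuous_map_in_subtopology)
  qed
  have cg: "continuous_map Y X (\<lambda>H. fst ` H)"
  proof -
    have "continuous_map Y (topology_generated_by BD) (\<lambda>H. fst ` H)"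
    proof (rule continuous_on_generated_topo)
      show "(\<lambda>H. fst ` H) ` topspace Y \<subseteq> \<Union> BD" by (simp add: UBD)
    next
      fix U assume "U \<in> BD"
      then consider K where "U = {H. H \<inter> K = {}}" "compactin (Dtop p k) K"
        | V where "U = {H. H \<inter> V \<noteq> {}}" "openin (Dtop p k) V"
        unfolding BD_def by blast
      then show "openin Y ((\<lambda>H. fst ` H) -` U \<inter> topspace Y)"
      proof cases
        case 1
        have "compactin (top_of_set circle_grp) circle_grp"
          by (simp add: compactin_subtopology circle_grp_def compact_sphere)
        then have "compactin (Gtop p k) (K \<times> circle_grp)"
          using 1(2) by (simp add: Gtop_def compactin_Times)
        then have "openin (topology_generated_by BG) {H. H \<inter> (K \<times> circle_grp) = {}}"
          by (intro topology_generated_by_Basis) (auto simp: BG_def)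
        moreover have "(\<lambda>H. fst ` H) -` U \<inter> topspace Y = {H. H \<inter> (K \<times> circle_grp) = {}} \<inter> C1"
          using C1eq ci_ne by (auto simp: tY 1(1))
        ultimately show ?thesis unfolding Y openin_subtopology by blast
      next
        case 2
        have "openin (Gtop p k) (V \<times> circle_grp)"
          using 2(2) by (simp add: Gtop_def openin_prod_Times_iff)
        then have "openin (topology_generated_by BG) {H. H \<inter> (V \<times> circle_grp) \<noteq> {}}"
          by (intro topology_generated_by_Basis) (auto simp: BG_def)
        moreover have "(\<lambda>H. fst ` H) -` U \<inter> topspace Y = {H. H \<inter> (V \<times> circle_grp) \<noteq> {}} \<inter> C1"
          using C1eq ci_ne by (auto simp: tY 2(1))
        ultimately show ?thesis unfolding Y openin_subtopology by blast
      qed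
    qed
    moreover have "(\<lambda>H. fst ` H) ` topspace Y \<subseteq> SD"
      using C1eq ci_ne by (auto simp: tY split: if_splits)
    ultimately show ?thesis unfolding X by (auto simp add: continuous_map_in_subtopology)
  qed
  have inv1: "\<forall>D\<in>topspace X. fst ` (pistar p k D) = D"
    using fD ci_ne by (simp add: tX)
  have inv2: "\<forall>H\<in>topspace Y. pistar p k (fst ` H) = H"
    using C1eq fD ci_ne by (auto simp: tY split: if_splits)
  have "homeomorphic_maps X Y (pistar p k) (\<lambda>H. fst ` H)"
    unfolding homeomorphic_maps_def using cf cg inv1 inv2 by blast
  then show ?thesis unfolding X_def Y_def homeomorphic_map_maps by blast
qed


theorem lemma8:
  fixes p k :: nat
  assumes "prime p" and "k > 0"
  shows "(\<forall>H. H \<in> closed_1dim_subgroups p k \<longleftrightarrow>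
              (\<exists>D. subgroup D (Dgrp p k) \<and> H = D \<times> circle_grp))
       \<and> (\<forall>D. subgroup D (Dgrp p k) \<longrightarrow> pistar p k D = D \<times> circle_grp)
       \<and> closedin (chabauty (Gtop p k) (Ggrp p k)) (closed_1dim_subgroups p k)
       \<and> homeomorphic_map (chabauty (Dtop p k) (Dgrp p k))
           (subtopology (chabauty (Gtop p k) (Ggrp p k)) (closed_1dim_subgroups p k))
           (pistar p k)"
proof -
  have pk: "p > 0" "k > 0" using assms prime_gt_0_nat by auto
  show ?thesis
    apply (intro conjI allI impI)
    subgoal for H by (rule C1_iff[OF pk])
    subgoal for D by (rule pistar_eq)
    subgoal by (rule closed_C1)
    subgoal by (rule homeo_C1[OF pk])
    done
qed

end
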